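(* Let $a>0$, let $m$ be the fixed positive integer of the standing setting, let $0<h\le a$, $\gamma>0$, and $1\le k\le m$. For any $g\in\mathcal C^k[0,h]$ define $w(x):=g(x)x^{\gamma-1}$ for $0<x\le h$ and $w(0):=0$. Then $w\in\mathcal C^{k-1}[0,h]$ and \[ \|w\|_{C^{k-1}[0,h]}\le C\|g^{(k)}\|_{C[0,h]}, \] where $C$ is a positive constant depending only on $a$, $k$ and $\gamma$.
   Context: Standing setting: $0<\alpha<1$, $n$ a positive integer, $m:=\max\{j\in\{0,1,2,\dots\}:j<n\alpha\}$. $C^k[0,h]$ denotes the $k$ times continuously differentiable functions on $[0,h]$ with norm $\|v\|_{C^k[0,h]}=\max_{0\le j\le k}\max_{[0,h]}|v^{(j)}|$, and $\mathcal C^k[0,h]:=\{v\in C^k[0,h]: v^{(j)}(0)=0,\ j=0,1,\dots,k\}$. *)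

theory Defs
  imports "HOL-Analysis.Analysis"
begin

definition m_of :: "nat \<Rightarrow> real \<Rightarrow> nat" where
  "m_of n \<alpha> = Max {j::nat. real j < real n * \<alpha>}"

text \<open>So g \<in> C^k[0,h]
  iff such a D exists, and then D j = g^(j) on [0,h].\<close>
definition deriv_family :: "nat \<Rightarrow> real \<Rightarrow> (real \<Rightarrow> real) \<Rightarrow> (nat \<Rightarrow> real \<Rightarrow> real) \<Rightarrow> bool" where
  "deriv_family k h g D \<longleftrightarrow>
     (\<forall>x\<in>{0..h}. D 0 x = g x) \<and>
     (\<forall>j\<le>k. continuous_on {0..h} (D j)) \<and>
     (\<forall>j<k. \<forall>x\<in>{0..h}. (D j has_real_derivative D (Suc j) x) (at x within {0..h}))"

definition Ck :: "nat \<Rightarrow> real \<Rightarrow> (real \<Rightarrow> real) \<Rightarrow> bool" where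
  "Ck k h g \<longleftrightarrow> (\<exists>D. deriv_family k h g D)"

definition Ck0 :: "nat \<Rightarrow> real \<Rightarrow> (real \<Rightarrow> real) \<Rightarrow> bool" where
  "Ck0 k h g \<longleftrightarrow> (\<exists>D. deriv_family k h g D \<and> (\<forall>j\<le>k. D j 0 = 0))"

definition supnorm :: "real \<Rightarrow> (real \<Rightarrow> real) \<Rightarrow> real" where
  "supnorm h f = Sup ((\<lambda>x. \<bar>f x\<bar>) ` {0..h})"

definition Ck_norm :: "nat \<Rightarrow> real \<Rightarrow> (nat \<Rightarrow> real \<Rightarrow> real) \<Rightarrow> real" where
  "Ck_norm k h D = (MAX j\<in>{..k}. supnorm h (D j))"

end

theory Submission imports Defs begin

lemma taylor_bound:
  assumes df: "deriv_family k h g D" and D0: "\<forall>j\<le>k. D j 0 = 0"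
    and M: "\<forall>x\<in>{0..h}. \<bar>D k x\<bar> \<le> M"
  shows "i \<le> k \<Longrightarrow> x \<in> {0..h} \<Longrightarrow> \<bar>D i x\<bar> \<le> M * x ^ (k - i)"
proof (induction "k - i" arbitrary: i x)
  case 0
  then have "i = k" by simp
  then show ?case using M 0 by simp
next
  case (Suc l)
  then have ik: "i < k" and l: "l = k - Suc i" by auto
  have IH: "\<And>t. t \<in> {0..h} \<Longrightarrow> \<bar>D (Suc i) t\<bar> \<le> M * t ^ (k - Suc i)"
    using Suc.hyps(1)[OF l] ik by auto
  have x: "0 \<le> x" "x \<le> h" using Suc.prems by auto
  have Mge: "0 \<le> M" using M x by (meson atLeastAtMost_iff abs_ge_zero order_trans)
  show ?case
  proof (cases "x = 0")
    case True
    then show ?thesis using D0 ik by (simp add: zero_power)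
  next
    case False
    hence xp: "0 < x" using x by simp
    have der: "\<And>t. 0 \<le> t \<Longrightarrow> t \<le> x \<Longrightarrow> (D i has_derivative (\<lambda>d. d * D (Suc i) t)) (at t within {0..x})"
    proof -
      fix t assume "0 \<le> t" "t \<le> x"
      hence "(D i has_real_derivative D (Suc i) t) (at t within {0..h})"
        using df ik x unfolding deriv_family_def by auto
      hence "(D i has_real_derivative D (Suc i) t) (at t within {0..x})"
        by (rule DERIV_subset) (use x in auto)
      thus "(D i has_derivative (\<lambda>d. d * D (Suc i) t)) (at t within {0..x})"
        by (simp add: has_field_derivative_def mult.commute[of _ "D (Suc i) t"])
    qed
    obtain t where t: "t \<in> {0<..<x}" "D i x - D i 0 = (x - 0) * D (Suc i) t"
      using mvt_simple[OF xp der] by blast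
    have "\<bar>D i x\<bar> = x * \<bar>D (Suc i) t\<bar>" using t D0 ik xp by (simp add: abs_mult)
    also have "\<dots> \<le> x * (M * t ^ (k - Suc i))"
      using IH[of t] t x xp by (intro mult_left_mono) auto
    also have "\<dots> \<le> x * (M * x ^ (k - Suc i))"
      using t Mge xp by (intro mult_left_mono power_mono) auto
    also have "\<dots> = M * x ^ (k - i)"
      using ik by (simp add: Suc_diff_Suc[symmetric] del: Suc_diff_Suc)
    finally show ?thesis .
  qed
qed


fun cf :: "real \<Rightarrow> nat \<Rightarrow> nat \<Rightarrow> real" where
  "cf \<gamma> 0 i = (if i = 0 then 1 else 0)"
| "cf \<gamma> (Suc j) i = (if i = 0 then 0 else cf \<gamma> j (i - 1)) + cf \<gamma> j i * (\<gamma> - 1 - real j + real i)"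

lemma cf_zero: "j < i \<Longrightarrow> cf \<gamma> j i = 0"
  by (induction j arbitrary: i) auto

definition G :: "real \<Rightarrow> (nat \<Rightarrow> real \<Rightarrow> real) \<Rightarrow> nat \<Rightarrow> real \<Rightarrow> real" where
  "G \<gamma> D j x = (\<Sum>i\<le>j. cf \<gamma> j i * D i x * x powr (\<gamma> - 1 - real j + real i))"

lemma G_deriv:
  assumes x: "0 < x" and d: "\<And>i. i \<le> j \<Longrightarrow> (D i has_real_derivative D (Suc i) x) (at x within S)"
  shows "(G \<gamma> D j has_real_derivative G \<gamma> D (Suc j) x) (at x within S)"
proof -
  define e where "e i = \<gamma> - 1 - real j + real i" for i
  have pw: "\<And>r. ((\<lambda>y. y powr r) has_real_derivative r * x powr (r - 1)) (at x within S)"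
    using has_real_derivative_powr[OF x] by (rule has_field_derivative_at_within)
  have "((\<lambda>y. \<Sum>i\<le>j. cf \<gamma> j i * D i y * y powr e i) has_real_derivative
      (\<Sum>i\<le>j. cf \<gamma> j i * (D (Suc i) x * x powr e i + D i x * (e i * x powr (e i - 1))))) (at x within S)"
    by (intro DERIV_sum) (use x in \<open>auto simp: mult.assoc intro!: derivative_eq_intros d pw\<close>)
  moreover have "(\<lambda>y. \<Sum>i\<le>j. cf \<gamma> j i * D i y * y powr e i) = G \<gamma> D j"
    by (auto simp: G_def e_def fun_eq_iff)
  moreover have "(\<Sum>i\<le>j. cf \<gamma> j i * (D (Suc i) x * x powr e i + D i x * (e i * x powr (e i - 1))))
      = G \<gamma> D (Suc j) x"
  proof -
    have A: "(\<Sum>i\<le>Suc j. (if i = 0 then 0 else cf \<gamma> j (i - 1)) * D i x * x powr (\<gamma> - 1 - real (Suc j) + real i))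
        = (\<Sum>i\<le>j. cf \<gamma> j i * D (Suc i) x * x powr e i)"
      by (subst sum.atMost_Suc_shift) (simp add: e_def algebra_simps)
    have B: "(\<Sum>i\<le>Suc j. cf \<gamma> j i * (\<gamma> - 1 - real j + real i) * D i x * x powr (\<gamma> - 1 - real (Suc j) + real i))
        = (\<Sum>i\<le>j. cf \<gamma> j i * D i x * (e i * x powr (e i - 1)))"
      by (simp add: cf_zero e_def algebra_simps)
    have "G \<gamma> D (Suc j) x = (\<Sum>i\<le>Suc j. (if i = 0 then 0 else cf \<gamma> j (i - 1)) * D i x * x powr (\<gamma> - 1 - real (Suc j) + real i))
       + (\<Sum>i\<le>Suc j. cf \<gamma> j i * (\<gamma> - 1 - real j + real i) * D i x * x powr (\<gamma> - 1 - real (Suc j) + real i))"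
      unfolding G_def by (simp add: sum.distrib[symmetric] algebra_simps del: of_nat_Suc)
    also have "\<dots> = (\<Sum>i\<le>j. cf \<gamma> j i * (D (Suc i) x * x powr e i + D i x * (e i * x powr (e i - 1))))"
      unfolding A B by (simp add: sum.distrib[symmetric] algebra_simps)
    finally show ?thesis by simp
  qed
  ultimately show ?thesis by simp
qed


lemma G_bound:
  assumes tb: "\<And>i x. i \<le> k \<Longrightarrow> x \<in> {0..h} \<Longrightarrow> \<bar>D i x\<bar> \<le> M * x ^ (k - i)"
    and jk: "j \<le> k" and x: "x \<in> {0..h}" and M: "0 \<le> M"
  shows "\<bar>G \<gamma> D j x\<bar> \<le> (\<Sum>i\<le>j. \<bar>cf \<gamma> j i\<bar>) * M * x powr (real k - real j + \<gamma> - 1)"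
proof (cases "x = 0")
  case True then show ?thesis by (simp add: G_def)
next
  case False
  hence xp: "0 < x" using x by simp
  have "\<bar>G \<gamma> D j x\<bar> \<le> (\<Sum>i\<le>j. \<bar>cf \<gamma> j i * D i x * x powr (\<gamma> - 1 - real j + real i)\<bar>)"
    unfolding G_def by (rule sum_abs)
  also have "\<dots> \<le> (\<Sum>i\<le>j. \<bar>cf \<gamma> j i\<bar> * M * x powr (real k - real j + \<gamma> - 1))"
  proof (rule sum_mono)
    fix i assume i: "i \<in> {..j}"
    have "\<bar>cf \<gamma> j i * D i x * x powr (\<gamma> - 1 - real j + real i)\<bar>
        = \<bar>cf \<gamma> j i\<bar> * \<bar>D i x\<bar> * x powr (\<gamma> - 1 - real j + real i)"
      by (simp add: abs_mult)
    also have "\<dots> \<le> \<bar>cf \<gamma> j i\<bar> * (M * x ^ (k - i)) * x powr (\<gamma> - 1 - real j + real i)"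
      using tb[of i x] i jk x by (intro mult_right_mono mult_left_mono) auto
    also have "x ^ (k - i) = x powr (real k - real i)"
    proof -
      have "real k - real i = real (k - i)" using i jk by (simp add: of_nat_diff)
      thus ?thesis using powr_realpow[OF xp, of "k - i"] by (simp only:)
    qed
    also have "\<bar>cf \<gamma> j i\<bar> * (M * x powr (real k - real i)) * x powr (\<gamma> - 1 - real j + real i)
       = \<bar>cf \<gamma> j i\<bar> * M * (x powr (real k - real i) * x powr (\<gamma> - 1 - real j + real i))"
      by simp
    also have "x powr (real k - real i) * x powr (\<gamma> - 1 - real j + real i) = x powr (real k - real j + \<gamma> - 1)"
      using powr_add[of x "real k - real i" "\<gamma> - 1 - real j + real i"] by (simp add: algebra_simps)
    finally show "\<bar>cf \<gamma> j i * D i x * x powr (\<gamma> - 1 - real j + real i)\<bar> \<le> \<bar>cf \<gamma> j i\<bar> * M * x powr (real k - real j + \<gamma> - 1)" .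
  qed
  also have "\<dots> = (\<Sum>i\<le>j. \<bar>cf \<gamma> j i\<bar>) * M * x powr (real k - real j + \<gamma> - 1)"
    by (simp add: sum_distrib_right)
  finally show ?thesis .
qed


lemma ev_within0:
  assumes "\<And>y. y \<in> {0<..h} \<Longrightarrow> P y"
  shows "eventually P (at (0::real) within {0..h})"
  unfolding eventually_at_filter
  by (rule always_eventually) (use assms in auto)

lemma cont0:
  fixes f :: "real \<Rightarrow> real"
  assumes b: "\<forall>y\<in>{0..h}. \<bar>f y\<bar> \<le> K * y powr p" and f0: "f 0 = 0" and p: "p > 0"
  shows "continuous (at 0 within {0..h}) f"
proof -
  have "(f \<longlongrightarrow> 0) (at 0 within {0..h})"
  proof (rule Lim_null_comparison)
    show "eventually (\<lambda>y. norm (f y) \<le> K * y powr p) (at 0 within {0..h})"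
      by (rule ev_within0) (use b in auto)
    have lim: "((\<lambda>y. y powr p) \<longlongrightarrow> 0) (at 0 within {0..h})"
      by (rule tendsto_zero_powrI[OF tendsto_ident_at tendsto_const ev_within0 p]) simp
    show "((\<lambda>y. K * y powr p) \<longlongrightarrow> 0) (at 0 within {0..h})"
      using tendsto_mult[OF tendsto_const[of K] lim] by simp
  qed
  thus ?thesis using f0 by (simp add: continuous_within)
qed

lemma deriv0:
  fixes f :: "real \<Rightarrow> real"
  assumes b: "\<forall>y\<in>{0..h}. \<bar>f y\<bar> \<le> K * y powr p" and f0: "f 0 = 0" and p: "p > 1"
  shows "(f has_real_derivative 0) (at 0 within {0..h})"
  unfolding has_field_derivative_iff
proof (rule Lim_null_comparison)
  show "eventually (\<lambda>y. norm ((f y - f 0) / (y - 0)) \<le> K * y powr (p - 1)) (at 0 within {0..h})"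
  proof (rule ev_within0)
    fix y :: real assume y: "y \<in> {0<..h}"
    have "norm ((f y - f 0) / (y - 0)) = \<bar>f y\<bar> / y" using y f0 by simp
    also have "\<dots> \<le> K * y powr p / y" using b y by (intro divide_right_mono) auto
    also have "\<dots> = K * y powr (p - 1)" using y by (simp add: powr_diff)
    finally show "norm ((f y - f 0) / (y - 0)) \<le> K * y powr (p - 1)" .
  qed
  have lim: "((\<lambda>y. y powr (p - 1)) \<longlongrightarrow> 0) (at 0 within {0..h})"
    by (rule tendsto_zero_powrI[OF tendsto_ident_at tendsto_const ev_within0]) (use p in auto)
  show "((\<lambda>y. K * y powr (p - 1)) \<longlongrightarrow> 0) (at 0 within {0..h})"
    using tendsto_mult[OF tendsto_const[of K] lim] by simp
qed


lemma G_cont_pos: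
  assumes x: "0 < x" and c: "\<And>i. i \<le> j \<Longrightarrow> continuous (at x within S) (D i)"
  shows "continuous (at x within S) (G \<gamma> D j)"
  unfolding G_def
proof (intro continuous_sum continuous_mult continuous_const c)
  fix i assume "i \<in> {..j}" thus "i \<le> j" by simp
next
  fix i
  show "continuous (at x within S) (\<lambda>y. y powr (\<gamma> - 1 - real j + real i))"
    by (rule continuous_at_within_powr[OF continuous_ident continuous_const]) (use x in simp)
qed


theorem lemmaA3:
  fixes a \<gamma> :: real and k :: nat
  assumes "a > 0" and "\<gamma> > 0" and "1 \<le> k"
  shows "\<exists>C>0. \<forall>(\<alpha>::real) (n::nat) (h::real) (g::real \<Rightarrow> real) (D::nat \<Rightarrow> real \<Rightarrow> real).
     0 < \<alpha> \<and> \<alpha> < 1 \<and> 0 < n \<and> k \<le> m_of n \<alpha> \<and> 0 < h \<and> h \<le> a \<and>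
     deriv_family k h g D \<and> (\<forall>j\<le>k. D j 0 = 0) \<longrightarrow>
     (\<exists>E. deriv_family (k - 1) h (\<lambda>x. if x = 0 then 0 else g x * x powr (\<gamma> - 1)) E \<and>
          (\<forall>j\<le>k - 1. E j 0 = 0) \<and>
          Ck_norm (k - 1) h E \<le> C * supnorm h (D k))"
proof -
  define S where "S j = (\<Sum>i\<le>j. \<bar>cf \<gamma> j i\<bar>)" for j
  define p where "p j = real k - real j + \<gamma> - 1" for j
  define A where "A = max 1 a"
  define C where "C = 1 + (\<Sum>j\<le>k. S j * A powr p j)"
  have S0: "S j \<ge> 0" for j unfolding S_def by (simp add: sum_nonneg)
  have Cge: "S j * A powr p j \<le> C" if "j \<le> k" for j
  proof -
    have "S j * A powr p j \<le> (\<Sum>j\<le>k. S j * A powr p j)"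
      by (rule member_le_sum) (use that S0 in \<open>auto intro: mult_nonneg_nonneg\<close>)
    thus ?thesis unfolding C_def by simp
  qed
  have Cpos: "C > 0" unfolding C_def using S0
    by (smt (verit) mult_nonneg_nonneg powr_ge_zero sum_nonneg)
  show ?thesis
  proof (rule exI[of _ C], intro conjI Cpos allI impI)
    fix \<alpha> :: real and n :: nat and h :: real and g :: "real \<Rightarrow> real" and D :: "nat \<Rightarrow> real \<Rightarrow> real"
    assume H: "0 < \<alpha> \<and> \<alpha> < 1 \<and> 0 < n \<and> k \<le> m_of n \<alpha> \<and> 0 < h \<and> h \<le> a \<and>
     deriv_family k h g D \<and> (\<forall>j\<le>k. D j 0 = 0)"
    hence hp: "0 < h" and ha: "h \<le> a" and df: "deriv_family k h g D" and D0: "\<forall>j\<le>k. D j 0 = 0"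
      by auto
    have contD: "\<And>j. j \<le> k \<Longrightarrow> continuous_on {0..h} (D j)"
      using df unfolding deriv_family_def by auto
    have derD: "\<And>j x. j < k \<Longrightarrow> x \<in> {0..h} \<Longrightarrow> (D j has_real_derivative D (Suc j) x) (at x within {0..h})"
      using df unfolding deriv_family_def by auto
    define M where "M = supnorm h (D k)"
    obtain B where B: "\<And>x. x \<in> {0..h} \<Longrightarrow> norm (D k x) \<le> B"
      using continuous_on_compact_bound[OF compact_Icc contD[of k]] by auto
    have bdd: "bdd_above ((\<lambda>x. \<bar>D k x\<bar>) ` {0..h})"
      by (rule bdd_aboveI[of _ B]) (use B in auto)
    have Mb: "\<forall>x\<in>{0..h}. \<bar>D k x\<bar> \<le> M"
      unfolding M_def supnorm_def using bdd by (auto intro: cSup_upper)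
    have M0: "0 \<le> M" using Mb hp by (meson abs_ge_zero atLeastAtMost_iff less_imp_le order_refl order_trans)
    have tb: "\<And>i x. i \<le> k \<Longrightarrow> x \<in> {0..h} \<Longrightarrow> \<bar>D i x\<bar> \<le> M * x ^ (k - i)"
      by (rule taylor_bound[OF df D0 Mb])
    have Gb: "\<And>j x. j \<le> k \<Longrightarrow> x \<in> {0..h} \<Longrightarrow> \<bar>G \<gamma> D j x\<bar> \<le> S j * M * x powr p j"
      unfolding S_def p_def by (rule G_bound[OF tb]) (use M0 in auto)
    have G00: "G \<gamma> D j 0 = 0" for j by (simp add: G_def)
    let ?w = "\<lambda>x. if x = 0 then 0 else g x * x powr (\<gamma> - 1)"
    have fam: "deriv_family (k - 1) h ?w (G \<gamma> D)"
      unfolding deriv_family_def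
    proof (intro conjI ballI allI impI)
      fix x :: real assume x: "x \<in> {0..h}"
      show "G \<gamma> D 0 x = ?w x"
        using df x unfolding deriv_family_def by (simp add: G_def)
    next
      fix j assume j: "j \<le> k - 1"
      show "continuous_on {0..h} (G \<gamma> D j)"
        unfolding continuous_on_eq_continuous_within
      proof
        fix x :: real assume x: "x \<in> {0..h}"
        show "continuous (at x within {0..h}) (G \<gamma> D j)"
        proof (cases "x = 0")
          case True
          have "p j > 0" using j \<open>\<gamma> > 0\<close> \<open>1 \<le> k\<close> unfolding p_def by auto
          then have "continuous (at 0 within {0..h}) (G \<gamma> D j)" using Gb[of j] j \<open>1 \<le> k\<close>
            by (intro cont0[of h _ "S j * M" "p j"]) (auto simp: G00)
          then show ?thesis using True by simp
        next
          case False
          have "continuous (at x within {0..h}) (D i)" if "i \<le> j" for i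
            using contD[of i] that j x unfolding continuous_on_eq_continuous_within by auto
          then show ?thesis using False x by (intro G_cont_pos) auto
        qed
      qed
    next
      fix j x assume j: "j < k - 1" and x: "x \<in> {0..h}"
      show "(G \<gamma> D j has_real_derivative G \<gamma> D (Suc j) x) (at x within {0..h})"
      proof (cases "x = 0")
        case True
        have "p j > 1" using j \<open>\<gamma> > 0\<close> unfolding p_def by auto
        then have "(G \<gamma> D j has_real_derivative 0) (at 0 within {0..h})" using Gb[of j] j
          by (intro deriv0[of h _ "S j * M" "p j"]) (auto simp: G00)
        then show ?thesis using True by (simp add: G00)
      next
        case False
        then show ?thesis using x j by (intro G_deriv derD) auto
      qed
    qed
    have norm: "Ck_norm (k - 1) h (G \<gamma> D) \<le> C * M"
      unfolding Ck_norm_def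
    proof (subst Max_le_iff, simp, simp, intro ballI)
      fix s assume "s \<in> (\<lambda>j. supnorm h (G \<gamma> D j)) ` {..k - 1}"
      then obtain j where j: "j \<le> k - 1" and s: "s = supnorm h (G \<gamma> D j)" by auto
      show "s \<le> C * M" unfolding s supnorm_def
      proof (rule cSup_least)
        show "(\<lambda>x. \<bar>G \<gamma> D j x\<bar>) ` {0..h} \<noteq> {}" using hp by auto
      next
        fix y assume "y \<in> (\<lambda>x. \<bar>G \<gamma> D j x\<bar>) ` {0..h}"
        then obtain x where x: "x \<in> {0..h}" and y: "y = \<bar>G \<gamma> D j x\<bar>" by auto
        have pj: "p j \<ge> 0" using j \<open>\<gamma> > 0\<close> \<open>1 \<le> k\<close> unfolding p_def by auto
        have "y \<le> S j * M * x powr p j" using Gb[of j x] j x y \<open>1 \<le> k\<close> by auto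
        also have "\<dots> \<le> S j * M * A powr p j"
          using x ha pj S0[of j] M0 unfolding A_def
          by (intro mult_left_mono powr_mono2) auto
        also have "\<dots> = (S j * A powr p j) * M" by simp
        also have "\<dots> \<le> C * M" using Cge[of j] j M0 by (intro mult_right_mono) auto
        finally show "y \<le> C * M" .
      qed
    qed
    show "\<exists>E. deriv_family (k - 1) h ?w E \<and> (\<forall>j\<le>k - 1. E j 0 = 0) \<and>
          Ck_norm (k - 1) h E \<le> C * supnorm h (D k)"
      using fam norm G00 unfolding M_def by blast
  qed
qed

end
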